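(* Fix an integer $k\ge 0$ and a link $i$ of a kinematic tree. Suppose all quantities below depend differentiably on a scalar parameter $\varepsilon$, and let $\delta$ denote $\frac{d}{d\varepsilon}$ at $\varepsilon=0$. Let $\eta_{L_i}\in\mathbb{R}^{6(k+1)}$ be the tangent vector of the world-frame comprehensive force transformation of link $i$, i.e. the vector with $$\delta\big({}^{w}\mathfrak{A}^{*}_{L_i}\big)={}^{w}\mathfrak{A}^{*}_{L_i}\,[\eta_{L_i}\times^{*}_{6\cdot k}].$$ Define the world-frame comprehensive momenta ${}^{w}\mathfrak{h}_{L_j}:={}^{w}\mathfrak{A}^{*}_{L_j}\mathfrak{h}_{L_j}$ and ${}^{w}\mathfrak{h}_{J_j}:={}^{w}\mathfrak{A}^{*}_{L_j}\mathfrak{h}_{J_j}$ for every link $j$, and assume they satisfy, for every link $j$, the propagation rule ${}^{w}\mathfrak{h}_{J_j}={}^{w}\mathfrak{h}_{L_j}+\sum_{c\in\mu(j)}{}^{w}\mathfrak{h}_{J_c}$, where $\mu(j)$ is the set of children of $j$. Then: (1) (world transformation) $\delta\,{}^{w}\mathfrak{h}_{L_i}={}^{w}\mathfrak{A}^{*}_{L_i}\,\delta\mathfrak{h}_{L_i}+{}^{w}\mathfrak{A}^{*}_{L_i}\,[\mathfrak{h}_{L_i}\,\hat{\times}^{*}_{6\cdot k}]\,\eta_{L_i}$; (2) (momentum propagation) $\delta\,{}^{w}\mathfrak{h}_{J_i}=\sum_{j\in\bar\mu(i)} E\,\delta\,{}^{w}\mathfrak{h}_{L_j}$, where $\bar\mu(i)$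 is the set consisting of $i$ and all its descendants and $E$ is the identity matrix; (3) (local recovery) $\delta\mathfrak{h}_{J_i}=\big({}^{w}\mathfrak{A}^{*}_{L_i}\big)^{-1}\delta\,{}^{w}\mathfrak{h}_{J_i}-\Big[\Big(\big({}^{w}\mathfrak{A}^{*}_{L_i}\big)^{-1}\,{}^{w}\mathfrak{h}_{J_i}\Big)\hat{\times}^{*}_{6\cdot k}\Big]\eta_{L_i}$.
   Context: Notation. For $u\in\mathbb{R}^3$, $[u\times]$ is the skew-symmetric cross-product matrix. For $u=(v_0,v_1)\in\mathbb{R}^6$ ($v_0,v_1\in\mathbb{R}^3$), $[u\times_6]=\begin{bmatrix}[v_0\times]&0\\ [v_1\times]&[v_0\times]\end{bmatrix}$ and the force-space operator is $[u\times^{*}_6]:=-[u\times_6]^{T}$. For a stacked vector $u=(u_0,\dots,u_k)\in\mathbb{R}^{6(k+1)}$ with $u_m\in\mathbb{R}^6$, $[u\times^{*}_{6\cdot k}]$ is the block lower-triangular Toeplitz matrix whose $(l,m)$ block ($l\ge m$) is $[u_{l-m}\times^{*}_6]$ and whose blocks above the diagonal are zero. The operator $[x\,\hat{\times}^{*}_{6\cdot k}]$ is the matrix defined by $[x\,\hat{\times}^{*}_{6\cdot k}]\,y=[y\times^{*}_{6\cdot k}]\,x$ for all $y$. The comprehensive representation of a time-dependent quantity $a(t)$ up to order $k$ is the stacked vector $(a, \tfrac{1}{1!}\dot a,\dots,\tfrac{1}{k!}a^{(k)})$. Setting: a multi-link system with tree structure; each link $j$ has a comprehensive link momentum $\mathfrak{h}_{L_j}\in\mathbb{R}^{6(k+1)}$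 (stacked spatial momentum and its scaled time derivatives, in the local frame of link $j$) and a comprehensive joint momentum $\mathfrak{h}_{J_j}\in\mathbb{R}^{6(k+1)}$ (momentum transmitted through the joint connecting link $j$ to its parent, in the local frame of link $j$). ${}^{w}\mathfrak{A}^{*}_{L_j}$ is the comprehensive force transformation of link $j$ relative to the world: the block lower-triangular Toeplitz matrix whose $l$-th subdiagonal block is $\frac{1}{l!}\frac{d^l}{dt^l}A^{*}_j(t)$, where $A^{*}_j=\begin{bmatrix}R_j&[p_j\times]R_j\\0&R_j\end{bmatrix}$ with $(R_j,p_j)$ the world orientation and position of link $j$; it is invertible. *)

theory Defs
  imports "HOL-Analysis.Analysis"
begin

text \<open>Vectors of R^N are functions nat => real (only indices < N matter);
  N x N matrices are functions nat => nat => real (only indices < N matter).\<close>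

definition matvec :: "nat \<Rightarrow> (nat \<Rightarrow> nat \<Rightarrow> real) \<Rightarrow> (nat \<Rightarrow> real) \<Rightarrow> nat \<Rightarrow> real" where
  "matvec N M x = (\<lambda>r. if r < N then (\<Sum>c<N. M r c * x c) else 0)"

definition matmul :: "nat \<Rightarrow> (nat \<Rightarrow> nat \<Rightarrow> real) \<Rightarrow> (nat \<Rightarrow> nat \<Rightarrow> real) \<Rightarrow> nat \<Rightarrow> nat \<Rightarrow> real" where
  "matmul N M P = (\<lambda>r c. if r < N \<and> c < N then (\<Sum>s<N. M r s * P s c) else 0)"

definition idmat :: "nat \<Rightarrow> nat \<Rightarrow> nat \<Rightarrow> real" where
  "idmat N = (\<lambda>r c. if r < N \<and> c < N \<and> r = c then 1 else 0)"

definition mat_invertible :: "nat \<Rightarrow> (nat \<Rightarrow> nat \<Rightarrow> real) \<Rightarrow> bool" where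
  "mat_invertible N M \<longleftrightarrow> (\<exists>B. matmul N M B = idmat N \<and> matmul N B M = idmat N)"

definition mat_inv :: "nat \<Rightarrow> (nat \<Rightarrow> nat \<Rightarrow> real) \<Rightarrow> nat \<Rightarrow> nat \<Rightarrow> real" where
  "mat_inv N M = (SOME B. matmul N M B = idmat N \<and> matmul N B M = idmat N)"

definition skew3 :: "(nat \<Rightarrow> real) \<Rightarrow> nat \<Rightarrow> nat \<Rightarrow> real" where
  "skew3 u i j =
     (if i = 0 \<and> j = 1 then - u 2 else if i = 0 \<and> j = 2 then u 1
      else if i = 1 \<and> j = 0 then u 2 else if i = 1 \<and> j = 2 then - u 0
      else if i = 2 \<and> j = 0 then - u 1 else if i = 2 \<and> j = 1 then u 0 else 0)"

definition cross6 :: "(nat \<Rightarrow> real) \<Rightarrow> nat \<Rightarrow> nat \<Rightarrow> real" where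
  "cross6 u i j =
     (if i < 3 \<and> j < 3 then skew3 u i j
      else if 3 \<le> i \<and> i < 6 \<and> j < 3 then skew3 (\<lambda>r. u (r + 3)) (i - 3) j
      else if 3 \<le> i \<and> i < 6 \<and> 3 \<le> j \<and> j < 6 then skew3 u (i - 3) (j - 3)
      else 0)"

definition crossf6 :: "(nat \<Rightarrow> real) \<Rightarrow> nat \<Rightarrow> nat \<Rightarrow> real" where
  "crossf6 u i j = - cross6 u j i"

text \<open>[u x*_{6.k}]: block lower-triangular Toeplitz, block (l,m) = [u_{l-m} x*_6],
  where u_m consists of components 6m .. 6m+5 of u.\<close>
definition crossfk :: "nat \<Rightarrow> (nat \<Rightarrow> real) \<Rightarrow> nat \<Rightarrow> nat \<Rightarrow> real" where
  "crossfk k u i j =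
     (if i < 6 * (k + 1) \<and> j < 6 * (k + 1) \<and> j div 6 \<le> i div 6
      then crossf6 (\<lambda>r. u (6 * (i div 6 - j div 6) + r)) (i mod 6) (j mod 6)
      else 0)"

text \<open>[x hat-x*_{6.k}], the matrix with [x hat-x*] y = [y x*] x for all y;
  written out column by column: column j is [e_j x*] x.\<close>
definition hatcrossfk :: "nat \<Rightarrow> (nat \<Rightarrow> real) \<Rightarrow> nat \<Rightarrow> nat \<Rightarrow> real" where
  "hatcrossfk k x i j =
     (if j < 6 * (k + 1) then matvec (6 * (k + 1)) (crossfk k (\<lambda>r. if r = j then 1 else 0)) x i
      else 0)"

definition delta :: "(real \<Rightarrow> nat \<Rightarrow> real) \<Rightarrow> nat \<Rightarrow> real" where
  "delta v = (\<lambda>r. deriv (\<lambda>e. v e r) 0)"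

text \<open>Kinematic tree: finite set of links with a parent map (None = attached to the base).\<close>
definition child_rel :: "'l set \<Rightarrow> ('l \<Rightarrow> 'l option) \<Rightarrow> ('l \<times> 'l) set" where
  "child_rel Links par = {(c, p). c \<in> Links \<and> par c = Some p}"

definition kin_tree :: "'l set \<Rightarrow> ('l \<Rightarrow> 'l option) \<Rightarrow> bool" where
  "kin_tree Links par \<longleftrightarrow>
     finite Links \<and> Links \<noteq> {} \<and>
     (\<forall>j\<in>Links. \<forall>p. par j = Some p \<longrightarrow> p \<in> Links) \<and>
     (\<exists>!r. r \<in> Links \<and> par r = None) \<and>
     (\<forall>j\<in>Links. (j, j) \<notin> (child_rel Links par)\<^sup>+)"

definition children :: "'l set \<Rightarrow> ('l \<Rightarrow> 'l option) \<Rightarrow> 'l \<Rightarrow> 'l set" where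
  "children Links par j = {c \<in> Links. par c = Some j}"

definition subtree :: "'l set \<Rightarrow> ('l \<Rightarrow> 'l option) \<Rightarrow> 'l \<Rightarrow> 'l set" where
  "subtree Links par i = {i} \<union> {j \<in> Links. (j, i) \<in> (child_rel Links par)\<^sup>+}"

end

theory Submission
  imports Defs
begin

lemma sum6: "(\<Sum>m<(6::nat). f m) = f 0 + f 1 + f 2 + f 3 + f 4 + (f 5::real)"
  by (simp add: eval_nat_numeral)
definition "sk0 i j = skew3 (\<lambda>r. if r = 0 then 1 else 0) i j"
definition "sk1 i j = skew3 (\<lambda>r. if r = 1 then 1 else 0) i j"
definition "sk2 i j = skew3 (\<lambda>r. if r = 2 then 1 else 0) i j"
lemma S3: "skew3 u i j = u 0 * sk0 i j + u 1 * sk1 i j + u 2 * sk2 i j"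
  unfolding sk0_def sk1_def sk2_def skew3_def by (simp split: if_split)
lemma lin_cross6: "cross6 u a b = (\<Sum>m<6. u m * cross6 (\<lambda>r. if r = m then 1 else 0) a b)"
  unfolding sum6 cross6_def S3 by (simp split: if_split add: algebra_simps)

lemma lin_crossf6: "crossf6 u a b = (\<Sum>m<6. u m * crossf6 (\<lambda>r. if r = m then 1 else 0) a b)"
  unfolding crossf6_def by (subst lin_cross6) (simp add: sum_negf)

lemma lin_crossfk: "crossfk k u a b = (\<Sum>j<6*(k+1). u j * crossfk k (\<lambda>r. if r = j then 1 else 0) a b)"
proof (cases "a < 6 * (k + 1) \<and> b < 6 * (k + 1) \<and> b div 6 \<le> a div 6")
  case C: True
  define off where "off = 6 * (a div 6 - b div 6)"
  define c where "c = (\<lambda>m. crossf6 (\<lambda>r. if r = m then 1 else 0) (a mod 6) (b mod 6))"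
  have offm: "off + m < 6*(k+1)" if "m < 6" for m
  proof -
    have "a < (k+1)*6" using C by (simp add: mult.commute)
    then have "a div 6 < k+1" by (rule less_mult_imp_div_less)
    then have "a div 6 \<le> k" by simp
    then have "off \<le> 6 * k" unfolding off_def by simp
    then show ?thesis using that by simp
  qed
  have "crossfk k u a b = crossf6 (\<lambda>r. u (off + r)) (a mod 6) (b mod 6)"
    using C by (simp add: crossfk_def off_def)
  also have "\<dots> = (\<Sum>m<6. u (off + m) * c m)"
    unfolding c_def by (rule lin_crossf6)
  also have "\<dots> = (\<Sum>m<6. \<Sum>j<6*(k+1). if j = off + m then u j * c m else 0)"
    using offm by (intro sum.cong) (auto simp: sum.delta)
  also have "\<dots> = (\<Sum>j<6*(k+1). \<Sum>m<6. if j = off + m then u j * c m else 0)"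
    by (rule sum.swap)
  also have "\<dots> = (\<Sum>j<6*(k+1). u j * crossfk k (\<lambda>r. if r = j then 1 else 0) a b)"
  proof (intro sum.cong refl)
    fix j
    have "crossfk k (\<lambda>r. if r = j then 1 else 0) a b
        = crossf6 (\<lambda>r. if off + r = j then 1 else 0) (a mod 6) (b mod 6)"
      using C by (simp add: crossfk_def off_def)
    also have "\<dots> = (\<Sum>m<6. (if off + m = j then 1 else 0) * c m)"
      unfolding c_def by (rule lin_crossf6)
    finally have e: "crossfk k (\<lambda>r. if r = j then 1 else 0) a b = (\<Sum>m<6. (if off + m = j then 1 else 0) * c m)" .
    show "(\<Sum>m<6. if j = off + m then u j * c m else 0) = u j * crossfk k (\<lambda>r. if r = j then 1 else 0) a b"
      unfolding e sum_distrib_left by (intro sum.cong) auto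
  qed
  finally show ?thesis .
next
  case False
  have "\<And>v. crossfk k v a b = 0" unfolding crossfk_def by (rule if_not_P[OF False])
  then show ?thesis by simp
qed

lemma hat_lemma:
  assumes "s < 6*(k+1)"
  shows "matvec (6*(k+1)) (crossfk k eta) h s = matvec (6*(k+1)) (hatcrossfk k h) eta s"
proof -
  let ?N = "6*(k+1)"
  have "matvec ?N (crossfk k eta) h s = (\<Sum>c<?N. (\<Sum>j<?N. eta j * crossfk k (\<lambda>r. if r = j then 1 else 0) s c) * h c)"
    using assms by (simp add: matvec_def lin_crossfk[of k eta])
  also have "\<dots> = (\<Sum>c<?N. \<Sum>j<?N. eta j * crossfk k (\<lambda>r. if r = j then 1 else 0) s c * h c)"
    by (simp add: sum_distrib_right)
  also have "\<dots> = (\<Sum>j<?N. \<Sum>c<?N. eta j * crossfk k (\<lambda>r. if r = j then 1 else 0) s c * h c)"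
    by (rule sum.swap)
  also have "\<dots> = matvec ?N (hatcrossfk k h) eta s"
    using assms by (simp add: matvec_def hatcrossfk_def sum_distrib_right sum_distrib_left mult_ac)
  finally show ?thesis .
qed

lemma matvec_assoc:
  assumes "r < N"
  shows "matvec N M (matvec N P x) r = matvec N (matmul N M P) x r"
proof -
  have "matvec N M (matvec N P x) r = (\<Sum>s<N. \<Sum>c<N. M r s * (P s c * x c))"
    using assms by (simp add: matvec_def sum_distrib_left)
  also have "\<dots> = (\<Sum>c<N. \<Sum>s<N. M r s * (P s c * x c))" by (rule sum.swap)
  also have "\<dots> = matvec N (matmul N M P) x r"
    using assms by (simp add: matvec_def matmul_def sum_distrib_right sum_distrib_left mult_ac)
  finally show ?thesis .
qed

lemma matvec_cong: "(\<And>s. s < N \<Longrightarrow> v s = w s) \<Longrightarrow> matvec N M v r = matvec N M w r"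
  by (simp add: matvec_def)

lemma matvec_add: "matvec N M (\<lambda>s. v s + w s) r = matvec N M v r + matvec N M w r"
  by (simp add: matvec_def sum.distrib algebra_simps)

lemma matvec_id: assumes "r < N" shows "matvec N (idmat N) v r = v r"
proof -
  have "matvec N (idmat N) v r = (\<Sum>c<N. (if r < N \<and> c < N \<and> r = c then 1 else 0) * v c)"
    unfolding matvec_def idmat_def by (rule if_P[OF assms])
  also have "\<dots> = (\<Sum>c<N. if c = r then v c else 0)"
    by (rule sum.cong) auto
  also have "\<dots> = v r" using assms by (simp add: sum.delta')
  finally show ?thesis .
qed

lemma hat_cong: "(\<And>s. s < 6*(k+1) \<Longrightarrow> x s = y s) \<Longrightarrow> hatcrossfk k x a b = hatcrossfk k y a b"
  unfolding hatcrossfk_def by (simp add: matvec_def)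

lemma inv_left: assumes "mat_invertible N M" shows "matmul N (mat_inv N M) M = idmat N"
proof -
  have "\<exists>B. matmul N M B = idmat N \<and> matmul N B M = idmat N" using assms by (simp add: mat_invertible_def)
  then have "matmul N M (mat_inv N M) = idmat N \<and> matmul N (mat_inv N M) M = idmat N"
    unfolding mat_inv_def by (rule someI_ex)
  then show ?thesis by simp
qed

lemma deriv_matvec:
  assumes dA: "\<forall>a<N. \<forall>b<N. (\<lambda>e. A e a b) differentiable (at 0)"
    and dh: "\<forall>r<N. (\<lambda>e. h e r) differentiable (at 0)"
    and r: "r < N"
  shows "((\<lambda>e. matvec N (A e) (h e) r) has_real_derivative
          (\<Sum>c<N. deriv (\<lambda>e. A e r c) 0 * h 0 c + A 0 r c * deriv (\<lambda>e. h e c) 0)) (at 0)"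
proof -
  have eq: "(\<lambda>e. matvec N (A e) (h e) r) = (\<lambda>e. \<Sum>c<N. A e r c * h e c)"
    using r by (simp add: matvec_def)
  show ?thesis unfolding eq
  proof (rule DERIV_sum)
    fix c assume c: "c \<in> {..<N}"
    have 1: "((\<lambda>e. A e r c) has_real_derivative deriv (\<lambda>e. A e r c) 0) (at 0)"
      using dA r c by (simp add: DERIV_deriv_iff_real_differentiable)
    have 2: "((\<lambda>e. h e c) has_real_derivative deriv (\<lambda>e. h e c) 0) (at 0)"
      using dh c by (simp add: DERIV_deriv_iff_real_differentiable)
    show "((\<lambda>e. A e r c * h e c) has_real_derivative
          deriv (\<lambda>e. A e r c) 0 * h 0 c + A 0 r c * deriv (\<lambda>e. h e c) 0) (at 0)"
      using DERIV_mult[OF 1 2] by (simp add: mult.commute)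
  qed
qed

lemma world:
  assumes N: "N = 6*(k+1)"
    and dA: "\<forall>a<N. \<forall>b<N. (\<lambda>e. A e a b) differentiable (at 0)"
    and dh: "\<forall>r<N. (\<lambda>e. h e r) differentiable (at 0)"
    and eta: "\<forall>a<N. \<forall>b<N. deriv (\<lambda>e. A e a b) 0 = matmul N (A 0) (crossfk k eta) a b"
    and r: "r < N"
  shows "delta (\<lambda>e. matvec N (A e) (h e)) r =
           matvec N (A 0) (delta h) r + matvec N (A 0) (matvec N (hatcrossfk k (h 0)) eta) r"
proof -
  have "delta (\<lambda>e. matvec N (A e) (h e)) r =
     (\<Sum>c<N. deriv (\<lambda>e. A e r c) 0 * h 0 c + A 0 r c * deriv (\<lambda>e. h e c) 0)"
    unfolding delta_def by (rule DERIV_imp_deriv[OF deriv_matvec[OF dA dh r]])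
  also have "\<dots> = (\<Sum>c<N. matmul N (A 0) (crossfk k eta) r c * h 0 c) + (\<Sum>c<N. A 0 r c * delta h c)"
    unfolding sum.distrib delta_def using eta r by (intro arg_cong2[where f="(+)"] sum.cong) auto
  also have "\<dots> = matvec N (matmul N (A 0) (crossfk k eta)) (h 0) r + matvec N (A 0) (delta h) r"
    using r by (simp add: matvec_def)
  also have "\<dots> = matvec N (A 0) (matvec N (crossfk k eta) (h 0)) r + matvec N (A 0) (delta h) r"
    using r by (simp add: matvec_assoc)
  also have "matvec N (A 0) (matvec N (crossfk k eta) (h 0)) r = matvec N (A 0) (matvec N (hatcrossfk k (h 0)) eta) r"
    using hat_lemma[of _ k eta "h 0"] N by (intro matvec_cong) simp
  finally show ?thesis by simp
qed


lemma tree_sum: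
  fixes Links :: "'l set" and par and f g :: "'l \<Rightarrow> real"
  assumes tree: "kin_tree Links par" and j: "j \<in> Links"
    and hprop: "\<forall>j\<in>Links. g j = f j + (\<Sum>c\<in>children Links par j. g c)"
  shows "g j = (\<Sum>d\<in>subtree Links par j. f d)"
proof -
  define R where "R = child_rel Links par"
  have fin: "finite Links" and parL: "\<forall>j\<in>Links. \<forall>p. par j = Some p \<longrightarrow> p \<in> Links"
    and acyc0: "\<forall>j\<in>Links. (j, j) \<notin> R\<^sup>+"
    using tree unfolding kin_tree_def R_def by auto
  have RL: "R \<subseteq> Links \<times> Links" using parL unfolding R_def child_rel_def by auto
  have finR: "finite R" using RL fin by (meson finite_SigmaI finite_subset)
  have trL: "(a, b) \<in> R\<^sup>+ \<Longrightarrow> a \<in> Links" for a b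
  proof -
    assume "(a, b) \<in> R\<^sup>+"
    then obtain z where "(a, z) \<in> R" using tranclD by metis
    then show "a \<in> Links" using RL by blast
  qed
  have acyc: "acyclic R" unfolding acyclic_def using acyc0 trL by blast
  have wfR: "wf R" by (rule finite_acyclic_wf[OF finR acyc])
  have sv: "single_valued R" unfolding single_valued_def R_def child_rel_def by auto
  have sub: "subtree Links par x = {d. (d, x) \<in> R\<^sup>*}" for x
    unfolding subtree_def R_def[symmetric] using trL by (auto simp: rtrancl_eq_or_trancl)
  have ch: "children Links par x = {c. (c, x) \<in> R}" for x
    unfolding children_def R_def child_rel_def by auto
  have finsub: "finite (subtree Links par x)" for x
  proof -
    have "subtree Links par x \<subseteq> insert x Links" unfolding subtree_def by auto
    then show ?thesis using fin by (meson finite_insert finite_subset)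
  qed
  have finch: "finite (children Links par x)" for x
    using fin unfolding children_def by simp
  show ?thesis using j
  proof (induction j rule: wf_induct_rule[OF wfR])
    case (1 x)
    have decomp: "subtree Links par x = insert x (\<Union>c\<in>children Links par x. subtree Links par c)"
      unfolding sub ch by (auto elim: rtranclE intro: rtrancl_into_rtrancl)
    have notin: "x \<notin> (\<Union>c\<in>children Links par x. subtree Links par c)"
    proof
      assume "x \<in> (\<Union>c\<in>children Links par x. subtree Links par c)"
      then obtain c where "(c, x) \<in> R" "(x, c) \<in> R\<^sup>*" unfolding sub ch by auto
      then have "(x, x) \<in> R\<^sup>+" by (meson rtrancl_into_trancl1)
      then show False using acyc unfolding acyclic_def by blast
    qed
    have disj: "\<forall>c1\<in>children Links par x. \<forall>c2\<in>children Links par x. c1 \<noteq> c2 \<longrightarrow>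
        subtree Links par c1 \<inter> subtree Links par c2 = {}"
    proof (intro ballI impI)
      fix c1 c2 assume c1: "c1 \<in> children Links par x" and c2: "c2 \<in> children Links par x" and ne: "c1 \<noteq> c2"
      have key: "False" if a: "(a, x) \<in> R" "(b, x) \<in> R" "(a, b) \<in> R\<^sup>*" "a \<noteq> b" for a b
      proof -
        have "(a, b) \<in> R\<^sup>+" using a by (simp add: rtrancl_eq_or_trancl)
        then obtain y where "(a, y) \<in> R" "(y, b) \<in> R\<^sup>*" by (meson tranclD)
        with a(1) sv have "y = x" by (auto simp: single_valued_def)
        with \<open>(y, b) \<in> R\<^sup>*\<close> a(2) have "(x, x) \<in> R\<^sup>+" by (meson rtrancl_into_trancl1)
        then show False using acyc unfolding acyclic_def by blast
      qed
      show "subtree Links par c1 \<inter> subtree Links par c2 = {}"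
      proof (rule ccontr)
        assume "subtree Links par c1 \<inter> subtree Links par c2 \<noteq> {}"
        then obtain d where d1: "(d, c1) \<in> R\<^sup>*" and d2: "(d, c2) \<in> R\<^sup>*" unfolding sub by auto
        have "(c1, c2) \<in> R\<^sup>* \<or> (c2, c1) \<in> R\<^sup>*" by (rule single_valued_confluent[OF sv d1 d2])
        then show False using key c1 c2 ne unfolding ch by auto
      qed
    qed
    have chL: "c \<in> Links" if "c \<in> children Links par x" for c
      using that unfolding children_def by auto
    have "g x = f x + (\<Sum>c\<in>children Links par x. g c)" using hprop 1 by auto
    also have "\<dots> = f x + (\<Sum>c\<in>children Links par x. \<Sum>d\<in>subtree Links par c. f d)"
      using 1 chL ch by (intro arg_cong2[where f="(+)"] sum.cong) auto
    also have "(\<Sum>c\<in>children Links par x. \<Sum>d\<in>subtree Links par c. f d)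
        = (\<Sum>d\<in>(\<Union>c\<in>children Links par x. subtree Links par c). f d)"
      using finch finsub disj by (intro sum.UNION_disjoint[symmetric]) auto
    also have "f x + \<dots> = (\<Sum>d\<in>subtree Links par x. f d)"
      unfolding decomp using notin finch finsub by (subst sum.insert) auto
    finally show ?case .
  qed
qed
theorem lemma4:
  fixes k :: nat and Links :: "'l set" and par :: "'l \<Rightarrow> 'l option" and i :: 'l
    and A :: "'l \<Rightarrow> real \<Rightarrow> nat \<Rightarrow> nat \<Rightarrow> real"
    and hL hJ :: "'l \<Rightarrow> real \<Rightarrow> nat \<Rightarrow> real"
    and eta :: "nat \<Rightarrow> real"
  defines "N \<equiv> 6 * (k + 1)"
  defines "whL \<equiv> (\<lambda>j e. matvec N (A j e) (hL j e))"
    and "whJ \<equiv> (\<lambda>j e. matvec N (A j e) (hJ j e))"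
  assumes tree: "kin_tree Links par" and i: "i \<in> Links"
    and inv: "\<forall>j\<in>Links. \<forall>e. mat_invertible N (A j e)"
    and dA: "\<forall>j\<in>Links. \<forall>a<N. \<forall>b<N. (\<lambda>e. A j e a b) differentiable (at 0)"
    and dhL: "\<forall>j\<in>Links. \<forall>r<N. (\<lambda>e. hL j e r) differentiable (at 0)"
    and dhJ: "\<forall>j\<in>Links. \<forall>r<N. (\<lambda>e. hJ j e r) differentiable (at 0)"
    and eta: "\<forall>a<N. \<forall>b<N. deriv (\<lambda>e. A i e a b) 0 = matmul N (A i 0) (crossfk k eta) a b"
    and propag: "\<forall>e. \<forall>j\<in>Links. \<forall>r<N.
                 whJ j e r = whL j e r + (\<Sum>c\<in>children Links par j. whJ c e r)"
  shows "(\<forall>r<N. delta (whL i) r =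
              matvec N (A i 0) (delta (hL i)) r
            + matvec N (A i 0) (matvec N (hatcrossfk k (hL i 0)) eta) r)
       \<and> (\<forall>r<N. delta (whJ i) r =
              (\<Sum>j\<in>subtree Links par i. matvec N (idmat N) (delta (whL j)) r))
       \<and> (\<forall>r<N. delta (hJ i) r =
              matvec N (mat_inv N (A i 0)) (delta (whJ i)) r
            - matvec N (hatcrossfk k (matvec N (mat_inv N (A i 0)) (whJ i 0))) eta r)"
  proof -
  have N: "N = 6*(k+1)" by (simp add: N_def)
  have dAi: "\<forall>a<N. \<forall>b<N. (\<lambda>e. A i e a b) differentiable (at 0)" using dA i by blast
  have dhLj: "\<forall>r<N. (\<lambda>e. hL j e r) differentiable (at 0)" if "j \<in> Links" for j using dhL that by blast
  have dhJi: "\<forall>r<N. (\<lambda>e. hJ i e r) differentiable (at 0)" using dhJ i by blast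
  have P1: "\<forall>r<N. delta (whL i) r =
              matvec N (A i 0) (delta (hL i)) r
            + matvec N (A i 0) (matvec N (hatcrossfk k (hL i 0)) eta) r"
    unfolding whL_def using world[OF N dAi dhLj[OF i] eta] by blast
  have subL: "subtree Links par i \<subseteq> Links"
    using i unfolding subtree_def by auto
  have finsub: "finite (subtree Links par i)"
    using tree subL unfolding kin_tree_def by (meson finite_subset)
  have P2: "\<forall>r<N. delta (whJ i) r =
              (\<Sum>j\<in>subtree Links par i. matvec N (idmat N) (delta (whL j)) r)"
  proof (intro allI impI)
    fix r assume r: "r < N"
    have eq: "(\<lambda>e. whJ i e r) = (\<lambda>e. \<Sum>d\<in>subtree Links par i. whL d e r)"
    proof
      fix e
      show "whJ i e r = (\<Sum>d\<in>subtree Links par i. whL d e r)"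
        using tree_sum[where f="\<lambda>j. whL j e r" and g="\<lambda>j. whJ j e r", OF tree i] propag r by blast
    qed
    have "((\<lambda>e. \<Sum>d\<in>subtree Links par i. whL d e r) has_real_derivative
            (\<Sum>d\<in>subtree Links par i. delta (whL d) r)) (at 0)"
    proof (rule DERIV_sum)
      fix d assume d: "d \<in> subtree Links par i"
      then have dL: "d \<in> Links" using subL by blast
      have dAd: "\<forall>a<N. \<forall>b<N. (\<lambda>e. A d e a b) differentiable (at 0)" using dA dL by blast
      have "((\<lambda>e. whL d e r) has_real_derivative
          (\<Sum>c<N. deriv (\<lambda>e. A d e r c) 0 * hL d 0 c + A d 0 r c * deriv (\<lambda>e. hL d e c) 0)) (at 0)"
        unfolding whL_def by (rule deriv_matvec[OF dAd dhLj[OF dL] r])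
      then show "((\<lambda>e. whL d e r) has_real_derivative delta (whL d) r) (at 0)"
        unfolding delta_def using DERIV_imp_deriv by metis
    qed
    then have "delta (whJ i) r = (\<Sum>d\<in>subtree Links par i. delta (whL d) r)"
      unfolding delta_def eq by (rule DERIV_imp_deriv)
    then show "delta (whJ i) r = (\<Sum>j\<in>subtree Links par i. matvec N (idmat N) (delta (whL j)) r)"
      using r by (simp add: matvec_id)
  qed
  have P3: "\<forall>r<N. delta (hJ i) r =
              matvec N (mat_inv N (A i 0)) (delta (whJ i)) r
            - matvec N (hatcrossfk k (matvec N (mat_inv N (A i 0)) (whJ i 0))) eta r"
  proof (intro allI impI)
    fix r assume r: "r < N"
    define w where "w = (\<lambda>s. delta (hJ i) s + matvec N (hatcrossfk k (hJ i 0)) eta s)"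
    have invi: "matmul N (mat_inv N (A i 0)) (A i 0) = idmat N" using inv i inv_left by blast
    have W: "delta (whJ i) s = matvec N (A i 0) w s" if "s < N" for s
      unfolding whJ_def w_def matvec_add using world[OF N dAi dhJi eta that] by simp
    have "matvec N (mat_inv N (A i 0)) (delta (whJ i)) r
        = matvec N (mat_inv N (A i 0)) (matvec N (A i 0) w) r"
      using W by (intro matvec_cong) simp
    also have "\<dots> = w r" using r by (simp add: matvec_assoc invi matvec_id)
    finally have A1: "matvec N (mat_inv N (A i 0)) (delta (whJ i)) r = w r" .
    have hj: "matvec N (mat_inv N (A i 0)) (whJ i 0) s = hJ i 0 s" if "s < N" for s
      using that unfolding whJ_def by (simp add: matvec_assoc invi matvec_id)
    have A2: "matvec N (hatcrossfk k (matvec N (mat_inv N (A i 0)) (whJ i 0))) eta r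
        = matvec N (hatcrossfk k (hJ i 0)) eta r"
    proof -
      have hc: "hatcrossfk k (matvec N (mat_inv N (A i 0)) (whJ i 0)) = hatcrossfk k (hJ i 0)"
      proof (intro ext hat_cong)
        fix s assume "s < 6 * (k + 1)"
        then show "matvec N (mat_inv N (A i 0)) (whJ i 0) s = hJ i 0 s" using hj N by simp
      qed
      show ?thesis by (simp only: hc)
    qed
    show "delta (hJ i) r = matvec N (mat_inv N (A i 0)) (delta (whJ i)) r
            - matvec N (hatcrossfk k (matvec N (mat_inv N (A i 0)) (whJ i 0))) eta r"
      unfolding A1 A2 w_def by simp
  qed
  show ?thesis using P1 P2 P3 by blast
qed

end
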